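(* Let $m,n\ge 0$ with $m+n\ge 1$. The Heisenberg Lie superalgebra $H(m,n)$ is capable if and only if $m=1$ and $n=0$.
   Context: All algebras are over a field $\mathbb{F}$ of characteristic $\neq 2,3$. $H(m,n)$ is the Lie superalgebra with even basis $x_1,\dots,x_{2m},z$, odd basis $y_1,\dots,y_n$, and nonzero brackets $[x_i,x_{m+i}]=z$ ($1\le i\le m$), $[y_j,y_j]=z$ ($1\le j\le n$). A Lie superalgebra $L$ is capable if $L\cong H/Z(H)$ for some Lie superalgebra $H$, where $Z(H)$ denotes the center. *)

theory Defs
  imports Main
begin

record ('f, 'a) lsa =
  lcarrier :: "'a set"
  leven :: "'a set"
  lodd :: "'a set"
  ladd :: "'a \<Rightarrow> 'a \<Rightarrow> 'a"
  lzero :: 'a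
  lneg :: "'a \<Rightarrow> 'a"
  lsmul :: "'f \<Rightarrow> 'a \<Rightarrow> 'a"
  lbr :: "'a \<Rightarrow> 'a \<Rightarrow> 'a"

definition vector_space_on :: "('f::field, 'a) lsa \<Rightarrow> bool" where
  "vector_space_on L \<longleftrightarrow>
     lzero L \<in> lcarrier L \<and>
     (\<forall>x\<in>lcarrier L. \<forall>y\<in>lcarrier L. ladd L x y \<in> lcarrier L) \<and>
     (\<forall>x\<in>lcarrier L. lneg L x \<in> lcarrier L) \<and>
     (\<forall>c. \<forall>x\<in>lcarrier L. lsmul L c x \<in> lcarrier L) \<and>
     (\<forall>x\<in>lcarrier L. \<forall>y\<in>lcarrier L. \<forall>z\<in>lcarrier L.
        ladd L (ladd L x y) z = ladd L x (ladd L y z)) \<and>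
     (\<forall>x\<in>lcarrier L. \<forall>y\<in>lcarrier L. ladd L x y = ladd L y x) \<and>
     (\<forall>x\<in>lcarrier L. ladd L x (lzero L) = x) \<and>
     (\<forall>x\<in>lcarrier L. ladd L x (lneg L x) = lzero L) \<and>
     (\<forall>a b. \<forall>x\<in>lcarrier L. lsmul L (a * b) x = lsmul L a (lsmul L b x)) \<and>
     (\<forall>x\<in>lcarrier L. lsmul L 1 x = x) \<and>
     (\<forall>a. \<forall>x\<in>lcarrier L. \<forall>y\<in>lcarrier L.
        lsmul L a (ladd L x y) = ladd L (lsmul L a x) (lsmul L a y)) \<and>
     (\<forall>a b. \<forall>x\<in>lcarrier L. lsmul L (a + b) x = ladd L (lsmul L a x) (lsmul L b x))"

definition subspace_on :: "('f::field, 'a) lsa \<Rightarrow> 'a set \<Rightarrow> bool" where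
  "subspace_on L S \<longleftrightarrow> S \<subseteq> lcarrier L \<and> lzero L \<in> S \<and>
     (\<forall>x\<in>S. \<forall>y\<in>S. ladd L x y \<in> S) \<and> (\<forall>c. \<forall>x\<in>S. lsmul L c x \<in> S)"

definition hom :: "('f, 'a) lsa \<Rightarrow> nat \<Rightarrow> 'a set" where
  "hom L d = (if d = 0 then leven L else lodd L)"

definition lie_superalgebra :: "('f::field, 'a) lsa \<Rightarrow> bool" where
  "lie_superalgebra L \<longleftrightarrow>
     vector_space_on L \<and>
     subspace_on L (leven L) \<and> subspace_on L (lodd L) \<and>
     leven L \<inter> lodd L = {lzero L} \<and>
     (\<forall>x\<in>lcarrier L. \<exists>e\<in>leven L. \<exists>d\<in>lodd L. x = ladd L e d) \<and>
     (\<forall>x\<in>lcarrier L. \<forall>y\<in>lcarrier L. lbr L x y \<in> lcarrier L) \<and>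
     (\<forall>a b. \<forall>x\<in>lcarrier L. \<forall>y\<in>lcarrier L. \<forall>z\<in>lcarrier L.
        lbr L (ladd L (lsmul L a x) (lsmul L b y)) z
          = ladd L (lsmul L a (lbr L x z)) (lsmul L b (lbr L y z)) \<and>
        lbr L z (ladd L (lsmul L a x) (lsmul L b y))
          = ladd L (lsmul L a (lbr L z x)) (lsmul L b (lbr L z y))) \<and>
     (\<forall>dx<2. \<forall>dy<2. \<forall>x\<in>hom L dx. \<forall>y\<in>hom L dy.
        lbr L x y \<in> hom L ((dx + dy) mod 2)) \<and>
     (\<forall>dx<2. \<forall>dy<2. \<forall>x\<in>hom L dx. \<forall>y\<in>hom L dy.
        lbr L x y = lneg L (lsmul L ((-1) ^ (dx * dy)) (lbr L y x))) \<and>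
     (\<forall>dx<2. \<forall>dy<2. \<forall>dz<2. \<forall>x\<in>hom L dx. \<forall>y\<in>hom L dy. \<forall>z\<in>hom L dz.
        ladd L (lsmul L ((-1) ^ (dx * dz)) (lbr L x (lbr L y z)))
          (ladd L (lsmul L ((-1) ^ (dy * dx)) (lbr L y (lbr L z x)))
                  (lsmul L ((-1) ^ (dz * dy)) (lbr L z (lbr L x y)))) = lzero L)"

definition lsa_iso :: "('f::field, 'a) lsa \<Rightarrow> ('f, 'b) lsa \<Rightarrow> bool" where
  "lsa_iso A B \<longleftrightarrow> (\<exists>f. bij_betw f (lcarrier A) (lcarrier B) \<and>
     f ` leven A = leven B \<and> f ` lodd A = lodd B \<and>
     (\<forall>x\<in>lcarrier A. \<forall>y\<in>lcarrier A. f (ladd A x y) = ladd B (f x) (f y)) \<and>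
     (\<forall>c. \<forall>x\<in>lcarrier A. f (lsmul A c x) = lsmul B c (f x)) \<and>
     (\<forall>x\<in>lcarrier A. \<forall>y\<in>lcarrier A. f (lbr A x y) = lbr B (f x) (f y)))"

definition center :: "('f, 'a) lsa \<Rightarrow> 'a set" where
  "center L = {z \<in> lcarrier L. \<forall>x\<in>lcarrier L. lbr L z x = lzero L}"

definition coset :: "('f, 'a) lsa \<Rightarrow> 'a set \<Rightarrow> 'a \<Rightarrow> 'a set" where
  "coset L I x = {ladd L x i | i. i \<in> I}"

definition rep :: "'a set \<Rightarrow> 'a" where
  "rep A = (SOME a. a \<in> A)"

definition quotient :: "('f, 'a) lsa \<Rightarrow> 'a set \<Rightarrow> ('f, 'a set) lsa" where
  "quotient L I =
     \<lparr> lcarrier = coset L I ` lcarrier L,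
       leven = coset L I ` leven L,
       lodd = coset L I ` lodd L,
       ladd = (\<lambda>A B. coset L I (ladd L (rep A) (rep B))),
       lzero = coset L I (lzero L),
       lneg = (\<lambda>A. coset L I (lneg L (rep A))),
       lsmul = (\<lambda>c A. coset L I (lsmul L c (rep A))),
       lbr = (\<lambda>A B. coset L I (lbr L (rep A) (rep B))) \<rparr>"

text \<open>L is capable (with witness H taken from ambient type 'b) if L \<cong> H/Z(H).\<close>
definition capable_in :: "'b itself \<Rightarrow> ('f::field, 'a) lsa \<Rightarrow> bool" where
  "capable_in T L \<longleftrightarrow> (\<exists>H :: ('f, 'b) lsa.
      lie_superalgebra H \<and> lsa_iso (quotient H (center H)) L)"

text \<open>The Heisenberg Lie superalgebra H(m,n), realised on functions nat \<Rightarrow> 'f supported on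
  {0..2m+n}: basis vector e_k for k<2m is x_{k+1}, e_{2m} is z, e_{2m+1+j} is y_{j+1}.
  Nonzero brackets [x_i,x_{m+i}] = z = -[x_{m+i},x_i], [y_j,y_j] = z.\<close>
definition heis :: "nat \<Rightarrow> nat \<Rightarrow> ('f::field, nat \<Rightarrow> 'f) lsa" where
  "heis m n =
     \<lparr> lcarrier = {u. \<forall>k\<ge>2*m+n+1. u k = 0},
       leven = {u. \<forall>k>2*m. u k = 0},
       lodd = {u. (\<forall>k\<le>2*m. u k = 0) \<and> (\<forall>k\<ge>2*m+n+1. u k = 0)},
       ladd = (\<lambda>u v k. u k + v k),
       lzero = (\<lambda>k. 0),
       lneg = (\<lambda>u k. - u k),
       lsmul = (\<lambda>c u k. c * u k),
       lbr = (\<lambda>u v k. if k = 2*m then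
                 (\<Sum>i<m. u i * v (m+i) - u (m+i) * v i)
                 + (\<Sum>j<n. u (2*m+1+j) * v (2*m+1+j))
               else 0) \<rparr>"

end

theory Submission imports Defs begin

locale LSA =
  fixes L :: "('f::field, 'a) lsa"
  assumes ls: "lie_superalgebra L"
begin

abbreviation "Car \<equiv> lcarrier L"
abbreviation "Ev \<equiv> leven L"
abbreviation "Od \<equiv> lodd L"
abbreviation "pl \<equiv> ladd L"
abbreviation "sm \<equiv> lsmul L"
abbreviation "br \<equiv> lbr L"
abbreviation "z0 \<equiv> lzero L"
abbreviation "ng \<equiv> lneg L"

lemmas ax = ls[unfolded lie_superalgebra_def]
lemma vs: "vector_space_on L" using ax[THEN conjunct1] .

lemma zero_C[simp]: "z0 \<in> Car" using vs unfolding vector_space_on_def by simp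
lemma add_C[simp]: "x \<in> Car \<Longrightarrow> y \<in> Car \<Longrightarrow> pl x y \<in> Car" using vs unfolding vector_space_on_def by simp
lemma neg_C[simp]: "x \<in> Car \<Longrightarrow> ng x \<in> Car" using vs unfolding vector_space_on_def by simp
lemma smul_C[simp]: "x \<in> Car \<Longrightarrow> sm c x \<in> Car" using vs unfolding vector_space_on_def by simp
lemma add_assoc: "x \<in> Car \<Longrightarrow> y \<in> Car \<Longrightarrow> z \<in> Car \<Longrightarrow> pl (pl x y) z = pl x (pl y z)"
  using vs unfolding vector_space_on_def by blast
lemma add_comm: "x \<in> Car \<Longrightarrow> y \<in> Car \<Longrightarrow> pl x y = pl y x"
  using vs unfolding vector_space_on_def by blast
lemma add_0[simp]: "x \<in> Car \<Longrightarrow> pl x z0 = x" using vs unfolding vector_space_on_def by simp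
lemma add_neg[simp]: "x \<in> Car \<Longrightarrow> pl x (ng x) = z0" using vs unfolding vector_space_on_def by simp
lemma smul_mult: "x \<in> Car \<Longrightarrow> sm (a * b) x = sm a (sm b x)" using vs unfolding vector_space_on_def by simp
lemma smul_1[simp]: "x \<in> Car \<Longrightarrow> sm 1 x = x" using vs unfolding vector_space_on_def by simp
lemma smul_add: "x \<in> Car \<Longrightarrow> y \<in> Car \<Longrightarrow> sm a (pl x y) = pl (sm a x) (sm a y)"
  using vs unfolding vector_space_on_def by simp
lemma add_smul: "x \<in> Car \<Longrightarrow> sm (a + b) x = pl (sm a x) (sm b x)"
  using vs unfolding vector_space_on_def by simp

lemma zero_add[simp]: "x \<in> Car \<Longrightarrow> pl z0 x = x" using add_comm[of z0 x] by simp
lemma neg_add[simp]: "x \<in> Car \<Longrightarrow> pl (ng x) x = z0" using add_comm[of "ng x" x] by simp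

lemma cancel: assumes "x \<in> Car" "y \<in> Car" "z \<in> Car" "pl x y = pl x z" shows "y = z"
proof -
  have "y = pl (pl (ng x) x) y" using assms by simp
  also have "\<dots> = pl (ng x) (pl x y)" using assms by (intro add_assoc) auto
  also have "\<dots> = pl (ng x) (pl x z)" by (simp only: assms(4))
  also have "\<dots> = pl (pl (ng x) x) z" using assms by (intro add_assoc[symmetric]) auto
  also have "\<dots> = z" using assms by simp
  finally show ?thesis .
qed

lemma smul_0[simp]: assumes "x \<in> Car" shows "sm 0 x = z0"
proof -
  have "pl (sm 0 x) (sm 0 x) = pl (sm 0 x) z0"
    using assms add_smul[of x 0 0] by simp
  thus ?thesis using assms cancel by (meson smul_C zero_C)
qed

lemma smul_z0[simp]: "sm c z0 = z0"
  using smul_mult[of z0 c 0] by simp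

lemma neg_smul: assumes "x \<in> Car" shows "ng x = sm (-1) x"
proof -
  have "pl x (sm (-1) x) = pl (sm 1 x) (sm (-1) x)" using assms by simp
  also have "\<dots> = sm (1 + -1) x" using assms add_smul by metis
  also have "\<dots> = pl x (ng x)" using assms by simp
  finally show ?thesis using assms cancel by (metis neg_C smul_C)
qed

lemma ng_z0[simp]: "ng z0 = z0" using neg_smul[of z0] by simp

lemma smul_eq_0: assumes "x \<in> Car" "c \<noteq> 0" "sm c x = z0" shows "x = z0"
proof -
  have "x = sm (inverse c * c) x" using assms by simp
  also have "\<dots> = sm (inverse c) (sm c x)" using assms smul_mult by blast
  finally show ?thesis using assms by simp
qed

lemma smul_smul_add: "x \<in> Car \<Longrightarrow> pl (sm a x) (sm b x) = sm (a+b) x" using add_smul by simp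

lemma subE: "subspace_on L Ev" using ax[THEN conjunct2, THEN conjunct1] by blast
lemma subO: "subspace_on L Od" using ax[THEN conjunct2, THEN conjunct2, THEN conjunct1] by blast
lemma Ev_C: "x \<in> Ev \<Longrightarrow> x \<in> Car" using subE unfolding subspace_on_def by blast
lemma Od_C: "x \<in> Od \<Longrightarrow> x \<in> Car" using subO unfolding subspace_on_def by blast
lemma Ev_smul: "x \<in> Ev \<Longrightarrow> sm c x \<in> Ev" using subE unfolding subspace_on_def by blast
lemma Od_smul: "x \<in> Od \<Longrightarrow> sm c x \<in> Od" using subO unfolding subspace_on_def by blast
lemma EO: "Ev \<inter> Od = {z0}" using ax[THEN conjunct2, THEN conjunct2, THEN conjunct2, THEN conjunct1] by blast
lemma decomp: "x \<in> Car \<Longrightarrow> \<exists>e\<in>Ev. \<exists>d\<in>Od. x = pl e d" using ax[THEN conjunct2, THEN conjunct2, THEN conjunct2, THEN conjunct2, THEN conjunct1] by blast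
lemma br_C[simp]: "x \<in> Car \<Longrightarrow> y \<in> Car \<Longrightarrow> br x y \<in> Car" using ax[THEN conjunct2, THEN conjunct2, THEN conjunct2, THEN conjunct2, THEN conjunct2, THEN conjunct1] by blast
lemma bil: "x \<in> Car \<Longrightarrow> y \<in> Car \<Longrightarrow> z \<in> Car \<Longrightarrow>
        br (pl (sm a x) (sm b y)) z = pl (sm a (br x z)) (sm b (br y z)) \<and>
        br z (pl (sm a x) (sm b y)) = pl (sm a (br z x)) (sm b (br z y))"
  using ax[THEN conjunct2, THEN conjunct2, THEN conjunct2, THEN conjunct2, THEN conjunct2, THEN conjunct2, THEN conjunct1] by blast
lemma br_hom: "dx < 2 \<Longrightarrow> dy < 2 \<Longrightarrow> x \<in> hom L dx \<Longrightarrow> y \<in> hom L dy \<Longrightarrow> br x y \<in> hom L ((dx + dy) mod 2)"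
  using ax[THEN conjunct2, THEN conjunct2, THEN conjunct2, THEN conjunct2, THEN conjunct2, THEN conjunct2, THEN conjunct2, THEN conjunct1] by blast
lemma antisym: "dx < 2 \<Longrightarrow> dy < 2 \<Longrightarrow> x \<in> hom L dx \<Longrightarrow> y \<in> hom L dy \<Longrightarrow>
   br x y = ng (sm ((-1) ^ (dx * dy)) (br y x))"
  using ax[THEN conjunct2, THEN conjunct2, THEN conjunct2, THEN conjunct2, THEN conjunct2, THEN conjunct2, THEN conjunct2, THEN conjunct2, THEN conjunct1] by blast
lemma jacobi: "dx < 2 \<Longrightarrow> dy < 2 \<Longrightarrow> dz < 2 \<Longrightarrow> x \<in> hom L dx \<Longrightarrow> y \<in> hom L dy \<Longrightarrow> z \<in> hom L dz \<Longrightarrow>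
        pl (sm ((-1) ^ (dx * dz)) (br x (br y z)))
          (pl (sm ((-1) ^ (dy * dx)) (br y (br z x)))
                  (sm ((-1) ^ (dz * dy)) (br z (br x y)))) = z0"
  using ax[THEN conjunct2, THEN conjunct2, THEN conjunct2, THEN conjunct2, THEN conjunct2, THEN conjunct2, THEN conjunct2, THEN conjunct2, THEN conjunct2] by blast

lemma hom_C: "d < 2 \<Longrightarrow> x \<in> hom L d \<Longrightarrow> x \<in> Car"
  unfolding hom_def by (auto split: if_splits intro: Ev_C Od_C)

lemma br_add_left: "x \<in> Car \<Longrightarrow> y \<in> Car \<Longrightarrow> z \<in> Car \<Longrightarrow> br (pl x y) z = pl (br x z) (br y z)"
  using bil[of x y z 1 1] by simp
lemma br_add_right: "x \<in> Car \<Longrightarrow> y \<in> Car \<Longrightarrow> z \<in> Car \<Longrightarrow> br z (pl x y) = pl (br z x) (br z y)"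
  using bil[of x y z 1 1] by simp
lemma br_smul_left: "x \<in> Car \<Longrightarrow> z \<in> Car \<Longrightarrow> br (sm c x) z = sm c (br x z)"
  using bil[of x x z c 0] by simp
lemma br_smul_right: "x \<in> Car \<Longrightarrow> z \<in> Car \<Longrightarrow> br z (sm c x) = sm c (br z x)"
  using bil[of x x z c 0] by simp
lemma br_0_left[simp]: "z \<in> Car \<Longrightarrow> br z0 z = z0"
  using br_smul_left[of z0 z 0] by simp
lemma br_0_right[simp]: "z \<in> Car \<Longrightarrow> br z z0 = z0"
  using br_smul_right[of z0 z 0] by simp

lemma neg_O: "x \<in> Od \<Longrightarrow> ng x \<in> Od" using neg_smul[OF Od_C] Od_smul by metis

lemma EO_zero: assumes "u \<in> Ev" "v \<in> Od" "pl u v = z0" shows "u = z0" "v = z0"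
proof -
  have uC: "u \<in> Car" and vC: "v \<in> Car" using assms Ev_C Od_C by auto
  have "pl v u = pl v (ng v)" using assms uC vC add_comm by simp
  hence "u = ng v" using cancel uC vC by (meson neg_C)
  hence "u \<in> Od" using neg_O assms by simp
  thus "u = z0" using EO assms by blast
  thus "v = z0" using assms vC by simp
qed

lemma hom_cases: "(d::nat) < 2 \<Longrightarrow> (d = 0 \<Longrightarrow> P) \<Longrightarrow> (d = 1 \<Longrightarrow> P) \<Longrightarrow> P" by linarith

lemma hom0: "hom L 0 = Ev" and hom1: "hom L 1 = Od" by (simp_all add: hom_def)

lemma homog_zero: assumes "d < 2" "e < 2" "u \<in> hom L d" "v \<in> hom L e" "d \<noteq> e" "pl u v = z0"
  shows "u = z0 \<and> v = z0"
proof -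
  have uC: "u \<in> Car" and vC: "v \<in> Car" using assms hom_C by auto
  show ?thesis
  proof (cases "d = 0")
    case True
    hence "e = 1" using assms by linarith
    hence "v \<in> Od" using assms hom1 by simp
    moreover have "u \<in> Ev" using True assms hom0 by simp
    ultimately show ?thesis using assms EO_zero by auto
  next
    case False
    hence "d = 1" "e = 0" using assms by linarith+
    moreover have "pl v u = z0" using assms uC vC add_comm by simp
    moreover have "v \<in> Ev" "u \<in> Od" using assms hom0 hom1 calculation by simp_all
    ultimately show ?thesis using assms EO_zero by auto
  qed
qed

lemma left_to_right:
  assumes "dg < 2" "g \<in> hom L dg" "\<And>d y. d < 2 \<Longrightarrow> y \<in> hom L d \<Longrightarrow> br g y = z0" "x \<in> Car"
  shows "br x g = z0"
proof -
  have gC: "g \<in> Car" using assms hom_C by blast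
  have H: "br y g = z0" if "d < 2" "y \<in> hom L d" for d y
    using antisym[OF that(1) assms(1) that(2) assms(2)] assms(3)[OF that] by simp
  obtain e d where ed: "e \<in> Ev" "d \<in> Od" "x = pl e d" using decomp assms by blast
  have "br x g = pl (br e g) (br d g)" using ed br_add_left gC Ev_C Od_C by blast
  also have "\<dots> = z0" using H[of 0 e] H[of 1 d] ed hom0 hom1 by simp
  finally show ?thesis .
qed

lemma br_homog_all: assumes "g \<in> Car" "\<And>d y. d < 2 \<Longrightarrow> y \<in> hom L d \<Longrightarrow> br g y = z0" "x \<in> Car"
  shows "br g x = z0"
proof -
  obtain e d where ed: "e \<in> Ev" "d \<in> Od" "x = pl e d" using decomp assms by blast
  have "br g x = pl (br g e) (br g d)" using ed br_add_right assms Ev_C Od_C by blast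
  also have "\<dots> = z0" using assms(2)[of 0 e] assms(2)[of 1 d] ed hom0 hom1 by simp
  finally show ?thesis .
qed

abbreviation "Z \<equiv> center L"

lemma Z_C: "c \<in> Z \<Longrightarrow> c \<in> Car" unfolding center_def by blast
lemma Z_br: "c \<in> Z \<Longrightarrow> x \<in> Car \<Longrightarrow> br c x = z0" unfolding center_def by blast
lemma Z_0: "z0 \<in> Z" unfolding center_def by simp
lemma Z_add: "c \<in> Z \<Longrightarrow> c' \<in> Z \<Longrightarrow> pl c c' \<in> Z"
  unfolding center_def by (auto simp: br_add_left)
lemma Z_smul: "c \<in> Z \<Longrightarrow> sm a c \<in> Z"
  unfolding center_def by (auto simp: br_smul_left)
lemma Z_neg: "c \<in> Z \<Longrightarrow> ng c \<in> Z"
  using Z_smul neg_smul Z_C by metis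

lemma Z_br_right: assumes "c \<in> Z" "x \<in> Car" shows "br x c = z0"
proof -
  have cC: "c \<in> Car" using assms Z_C by blast
  obtain e d where ed: "e \<in> Ev" "d \<in> Od" "c = pl e d" using decomp cC by blast
  have eC: "e \<in> Car" and dC: "d \<in> Car" using ed Ev_C Od_C by auto
  have K: "br e y = z0 \<and> br d y = z0" if "k < 2" "y \<in> hom L k" for k y
  proof -
    have yC: "y \<in> Car" using that hom_C by blast
    have "pl (br e y) (br d y) = z0" using Z_br[OF assms(1) yC] ed br_add_left eC dC yC by simp
    moreover have "br e y \<in> hom L k" using br_hom[of 0 k e y] that ed hom0 by simp
    moreover have "br d y \<in> hom L ((1 + k) mod 2)" using br_hom[of 1 k d y] that ed hom1 by simp
    moreover have "(1 + k) mod 2 < 2" "k \<noteq> (1 + k) mod 2" using that by (auto elim: hom_cases)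
    ultimately show ?thesis using homog_zero[of k "(1 + k) mod 2" "br e y" "br d y"] that by blast
  qed
  have "br x e = z0" by (rule left_to_right[of 0 e x]) (use K ed hom0 assms in auto)
  moreover have "br x d = z0" by (rule left_to_right[of 1 d x]) (use K ed hom1 assms in auto)
  ultimately show ?thesis using ed br_add_right eC dC assms by simp
qed

abbreviation "cs \<equiv> coset L Z"

lemma add_swap4: assumes "a \<in> Car" "i \<in> Car" "b \<in> Car" "j \<in> Car"
  shows "pl (pl a i) (pl b j) = pl (pl a b) (pl i j)"
proof -
  have "pl (pl a i) (pl b j) = pl a (pl i (pl b j))" using assms add_assoc by simp
  also have "\<dots> = pl a (pl (pl i b) j)" using assms add_assoc by simp
  also have "\<dots> = pl a (pl (pl b i) j)" using assms add_comm[of i b] by simp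
  also have "\<dots> = pl a (pl b (pl i j))" using assms add_assoc by simp
  also have "\<dots> = pl (pl a b) (pl i j)" using assms add_assoc by simp
  finally show ?thesis .
qed

lemma coset_mem: "x \<in> Car \<Longrightarrow> x \<in> cs x"
  unfolding coset_def using Z_0 by (auto intro!: exI[of _ z0])

lemma coset_shift: assumes "x \<in> Car" "i \<in> Z" shows "cs (pl x i) = cs x"
proof
  have iC: "i \<in> Car" using assms Z_C by blast
  show "cs (pl x i) \<subseteq> cs x"
  proof
    fix u assume "u \<in> cs (pl x i)"
    then obtain j where j: "j \<in> Z" "u = pl (pl x i) j" unfolding coset_def by blast
    hence "u = pl x (pl i j)" using add_assoc assms iC Z_C by simp
    moreover have "pl i j \<in> Z" using Z_add assms j by blast
    ultimately show "u \<in> cs x" unfolding coset_def by blast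
  qed
  show "cs x \<subseteq> cs (pl x i)"
  proof
    fix u assume "u \<in> cs x"
    then obtain j where j: "j \<in> Z" "u = pl x j" unfolding coset_def by blast
    have jC: "j \<in> Car" using j Z_C by blast
    have "pl (pl x i) (pl (ng i) j) = pl x (pl i (pl (ng i) j))" using add_assoc assms iC jC by simp
    also have "\<dots> = pl x (pl (pl i (ng i)) j)" using add_assoc[of i "ng i" j] assms iC jC by simp
    also have "\<dots> = u" using j iC jC by simp
    finally have "u = pl (pl x i) (pl (ng i) j)" by simp
    moreover have "pl (ng i) j \<in> Z" using Z_add Z_neg assms j by blast
    ultimately show "u \<in> cs (pl x i)" unfolding coset_def by blast
  qed
qed

lemma rep_cs: assumes "x \<in> Car" shows "\<exists>i\<in>Z. rep (cs x) = pl x i"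
proof -
  have "rep (cs x) \<in> cs x" unfolding rep_def using coset_mem[OF assms] by (rule someI)
  thus ?thesis unfolding coset_def by blast
qed

lemma cs0_Z: "u \<in> cs z0 \<Longrightarrow> u \<in> Z"
  unfolding coset_def using Z_C by auto

abbreviation "Q \<equiv> quotient L Z"

lemma Q_car: "lcarrier Q = cs ` Car" and Q_ev: "leven Q = cs ` Ev" and Q_od: "lodd Q = cs ` Od"
  by (simp_all add: quotient_def)

lemma q_add: assumes "x \<in> Car" "y \<in> Car" shows "ladd Q (cs x) (cs y) = cs (pl x y)"
proof -
  obtain i j where ij: "i \<in> Z" "j \<in> Z" "rep (cs x) = pl x i" "rep (cs y) = pl y j"
    using rep_cs assms by blast
  have "ladd Q (cs x) (cs y) = cs (pl (pl x i) (pl y j))" using ij by (simp add: quotient_def)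
  also have "\<dots> = cs (pl (pl x y) (pl i j))" using add_swap4 assms ij Z_C by simp
  also have "\<dots> = cs (pl x y)" using coset_shift Z_add ij assms by simp
  finally show ?thesis .
qed

lemma q_sm: assumes "x \<in> Car" shows "lsmul Q c (cs x) = cs (sm c x)"
proof -
  obtain i where i: "i \<in> Z" "rep (cs x) = pl x i" using rep_cs assms by blast
  have "lsmul Q c (cs x) = cs (sm c (pl x i))" using i by (simp add: quotient_def)
  also have "\<dots> = cs (pl (sm c x) (sm c i))" using smul_add assms i Z_C by simp
  also have "\<dots> = cs (sm c x)" using coset_shift Z_smul i assms by simp
  finally show ?thesis .
qed

lemma q_br: assumes "x \<in> Car" "y \<in> Car" shows "lbr Q (cs x) (cs y) = cs (br x y)"
proof -
  obtain i j where ij: "i \<in> Z" "j \<in> Z" "rep (cs x) = pl x i" "rep (cs y) = pl y j"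
    using rep_cs assms by blast
  have iC: "i \<in> Car" and jC: "j \<in> Car" using ij Z_C by auto
  have "lbr Q (cs x) (cs y) = cs (br (pl x i) (pl y j))" using ij by (simp add: quotient_def)
  also have "br (pl x i) (pl y j) = pl (br x (pl y j)) (br i (pl y j))"
    using br_add_left assms iC jC by simp
  also have "\<dots> = br x (pl y j)" using Z_br[OF ij(1)] assms jC by simp
  also have "\<dots> = pl (br x y) (br x j)" using br_add_right assms jC by simp
  also have "\<dots> = br x y" using Z_br_right[OF ij(2)] assms by simp
  finally show ?thesis .
qed

end

definition ee :: "nat \<Rightarrow> nat \<Rightarrow> 'f::field" where "ee p = (\<lambda>i. if i = p then 1 else 0)"

lemma heis_simps:
  "lcarrier (heis m n) = {u. \<forall>k\<ge>2*m+n+1. u k = 0}"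
  "leven (heis m n) = {u. \<forall>k>2*m. u k = 0}"
  "lodd (heis m n) = {u. (\<forall>k\<le>2*m. u k = 0) \<and> (\<forall>k\<ge>2*m+n+1. u k = 0)}"
  "ladd (heis m n) = (\<lambda>u v k. u k + v k)"
  "lzero (heis m n) = (\<lambda>k. 0)"
  "lsmul (heis m n) = (\<lambda>c u k. c * u k)"
  "lbr (heis m n) = (\<lambda>u v k. if k = 2*m then
                 (\<Sum>i<m. u i * v (m+i) - u (m+i) * v i)
                 + (\<Sum>j<n. u (2*m+1+j) * v (2*m+1+j))
               else 0)"
  by (simp_all add: heis_def)

lemma sum1: "(\<Sum>i<m. ee p i * ee q (m+i) :: 'f::field) = (if p < m \<and> q = m + p then 1 else 0)"
proof -
  have "(\<Sum>i<m. ee p i * ee q (m+i) :: 'f) = (\<Sum>i<m. if i = p then (if q = m + p then 1 else 0) else 0)"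
    by (rule sum.cong) (auto simp: ee_def)
  also have "\<dots> = (if p < m \<and> q = m + p then 1 else 0)" by (simp add: sum.delta)
  finally show ?thesis .
qed

lemma sum2: "(\<Sum>i<m. ee p (m+i) * ee q i :: 'f::field) = (if q < m \<and> p = m + q then 1 else 0)"
proof -
  have "(\<Sum>i<m. ee p (m+i) * ee q i :: 'f) = (\<Sum>i<m. if i = q then (if p = m + q then 1 else 0) else 0)"
    by (rule sum.cong) (auto simp: ee_def)
  also have "\<dots> = (if q < m \<and> p = m + q then 1 else 0)" by (simp add: sum.delta)
  finally show ?thesis .
qed

lemma sum3: "(\<Sum>j<n. ee p (2*m+1+j) * ee q (2*m+1+j) :: 'f::field) =
   (if 2*m < p \<and> p < 2*m+1+n \<and> p = q then 1 else 0)"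
proof -
  have "(\<Sum>j<n. ee p (2*m+1+j) * ee q (2*m+1+j) :: 'f) =
     (\<Sum>j<n. if j = p - (2*m+1) then (if 2*m < p \<and> p = q then 1 else 0) else 0)"
    by (rule sum.cong) (auto simp: ee_def)
  also have "\<dots> = (if 2*m < p \<and> p < 2*m+1+n \<and> p = q then 1 else 0)" by (auto simp add: sum.delta)
  finally show ?thesis .
qed

lemma heis_br_ee: "lbr (heis m n) (ee p) (ee q) = (\<lambda>k. if k = 2*m then
   ((if p < m \<and> q = m + p then 1 else 0) - (if q < m \<and> p = m + q then 1 else 0)
    + (if 2*m < p \<and> p < 2*m+1+n \<and> p = q then 1 else 0)) else (0::'f::field))"
  unfolding heis_simps sum_subtractf sum1 sum2 sum3 ..


locale CAP = LSA L for L :: "('f::field, 'a) lsa" +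
  fixes m n :: nat and f :: "'a set \<Rightarrow> nat \<Rightarrow> 'f"
  assumes fbij: "bij_betw f (lcarrier (quotient L (center L))) (lcarrier (heis m n))"
    and fev: "f ` leven (quotient L (center L)) = leven (heis m n)"
    and fod: "f ` lodd (quotient L (center L)) = lodd (heis m n)"
    and fadd: "\<forall>x\<in>lcarrier (quotient L (center L)). \<forall>y\<in>lcarrier (quotient L (center L)).
        f (ladd (quotient L (center L)) x y) = ladd (heis m n) (f x) (f y)"
    and fsm: "\<forall>c. \<forall>x\<in>lcarrier (quotient L (center L)).
        f (lsmul (quotient L (center L)) c x) = lsmul (heis m n) c (f x)"
    and fbr: "\<forall>x\<in>lcarrier (quotient L (center L)). \<forall>y\<in>lcarrier (quotient L (center L)).
        f (lbr (quotient L (center L)) x y) = lbr (heis m n) (f x) (f y)"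
begin

definition pi where "pi x = f (cs x)"

lemma cs_Q: "x \<in> Car \<Longrightarrow> cs x \<in> lcarrier Q" by (simp add: Q_car)

lemma pi_add: "x \<in> Car \<Longrightarrow> y \<in> Car \<Longrightarrow> pi (pl x y) = (\<lambda>k. pi x k + pi y k)"
  unfolding pi_def using fadd[rule_format, OF cs_Q[of x] cs_Q[of y]] q_add[of x y] by (simp add: heis_simps)

lemma pi_sm: "x \<in> Car \<Longrightarrow> pi (sm c x) = (\<lambda>k. c * pi x k)"
  unfolding pi_def using fsm[rule_format, OF cs_Q[of x], of c] q_sm[of x c] by (simp add: heis_simps)

lemma pi_br: "x \<in> Car \<Longrightarrow> y \<in> Car \<Longrightarrow> pi (br x y) = lbr (heis m n) (pi x) (pi y)"
  unfolding pi_def using fbr[rule_format, OF cs_Q[of x] cs_Q[of y]] q_br[of x y] by simp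

lemma pi_z0: "pi z0 = (\<lambda>k. 0)"
proof -
  have "pi z0 = (\<lambda>k. pi z0 k + pi z0 k)" using pi_add[of z0 z0] by simp
  hence "\<And>k. pi z0 k = pi z0 k + pi z0 k" by metis
  hence "\<And>k. pi z0 k = 0" by (metis add_cancel_right_right)
  thus ?thesis by (auto simp: fun_eq_iff)
qed

lemma pi_Z: "c \<in> Z \<Longrightarrow> pi c = (\<lambda>k. 0)"
  using coset_shift[of z0 c] pi_z0 Z_C unfolding pi_def by simp

lemma pi_0_Z: assumes "x \<in> Car" "pi x = (\<lambda>k. 0)" shows "x \<in> Z"
proof -
  have "f (cs x) = f (cs z0)" using assms pi_z0 unfolding pi_def by simp
  hence "cs x = cs z0" using fbij cs_Q assms unfolding bij_betw_def inj_on_def by simp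
  thus ?thesis using coset_mem[OF assms(1)] cs0_Z by simp
qed

lemma pre_even: assumes "k \<le> 2*m" shows "\<exists>a\<in>Ev. pi a = ee k"
proof -
  have "ee k \<in> leven (heis m n)" using assms by (simp add: heis_simps ee_def)
  then obtain A where "A \<in> leven Q" "f A = ee k" using fev by (metis imageE)
  thus ?thesis using Q_ev unfolding pi_def by auto
qed

lemma pre_odd: assumes "2*m < k" "k \<le> 2*m+n" shows "\<exists>a\<in>Od. pi a = ee k"
proof -
  have "ee k \<in> lodd (heis m n)" using assms by (simp add: heis_simps ee_def)
  then obtain A where "A \<in> lodd Q" "f A = ee k" using fod by (metis imageE)
  thus ?thesis using Q_od unfolding pi_def by auto
qed

lemma K: assumes "x \<in> Car" "y \<in> Car" "w \<in> Car" "br x w = z0" "\<And>k. pi y k = S * pi w k"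
  shows "br x y = z0"
proof -
  define c where "c = pl y (sm (-S) w)"
  have "pi c = (\<lambda>k. 0)" unfolding c_def using assms pi_add pi_sm by simp
  hence "c \<in> Z" using pi_0_Z assms c_def by simp
  hence "z0 = br x c" using Z_br_right assms c_def by simp
  also have "\<dots> = pl (br x y) (sm (-S) (br x w))" unfolding c_def using assms br_add_right br_smul_right by simp
  also have "\<dots> = br x y" using assms by simp
  finally show ?thesis by simp
qed

lemma sign_ne0: "((-1::'f) ^ k) \<noteq> 0" by simp

lemma kill: assumes "dx < 2" "dy < 2" "du < 2" "x \<in> hom L dx" "y \<in> hom L dy" "u \<in> hom L du"
  "pi (br u x) = (\<lambda>k. 0)" "pi (br x y) = (\<lambda>k. 0)"
  shows "br x (br y u) = z0"
proof -
  have C: "x \<in> Car" "y \<in> Car" "u \<in> Car" using assms hom_C by auto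
  have Z1: "br u x \<in> Z" "br x y \<in> Z" using pi_0_Z assms C by auto
  have "br y (br u x) = z0" "br u (br x y) = z0" using Z_br_right Z1 C by auto
  hence "sm ((-1) ^ (dx * du)) (br x (br y u)) = z0"
    using jacobi[OF assms(1-6)] C by simp
  thus ?thesis using smul_eq_0 sign_ne0 C by (meson br_C)
qed

lemma e2m_form: "lbr (heis m n) u v k = (lbr (heis m n) u v (2*m)) * ee (2*m) k"
  by (simp add: heis_simps ee_def)

lemma core: assumes "dp < 2" "dq < 2" "ap \<in> hom L dp" "aq \<in> hom L dq"
  "pi (br ap aq) = ee (2*m)" "br ap (br ap aq) = z0" "br aq (br ap aq) = z0"
  shows False
proof -
  define w where "w = br ap aq"
  have C: "ap \<in> Car" "aq \<in> Car" using assms hom_C by auto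
  have wC: "w \<in> Car" using C w_def by simp
  have wh: "w \<in> hom L ((dp + dq) mod 2)" using br_hom assms w_def by blast
  have pw: "\<And>k. pi w k = ee (2*m) k" using assms w_def by simp
  have "br w h = z0" if "d < 2" "h \<in> hom L d" for d h
  proof -
    have hC: "h \<in> Car" using that hom_C by blast
    have J: "pl (sm ((-1) ^ (dp * d)) (br ap (br aq h)))
          (pl (sm ((-1) ^ (dq * dp)) (br aq (br h ap)))
                  (sm ((-1) ^ (d * dq)) (br h (br ap aq)))) = z0"
      using jacobi[OF assms(1,2) that(1) assms(3,4) that(2)] .
    have p1: "\<And>k. pi (br aq h) k = lbr (heis m n) (pi aq) (pi h) (2*m) * pi w k"
      using pi_br[of aq h] C hC e2m_form pw by simp
    have p2: "\<And>k. pi (br h ap) k = lbr (heis m n) (pi h) (pi ap) (2*m) * pi w k"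
      using pi_br[of h ap] C hC e2m_form pw by simp
    have 1: "br ap (br aq h) = z0"
      using K[of ap "br aq h" w, OF _ _ _ _ p1] C hC wC assms w_def by simp
    have 2: "br aq (br h ap) = z0"
      using K[of aq "br h ap" w, OF _ _ _ _ p2] C hC wC assms w_def by simp
    have "sm ((-1) ^ (d * dq)) (br h w) = z0" using J 1 2 C hC w_def by simp
    hence "br h w = z0" using smul_eq_0 sign_ne0 hC wC by (meson br_C)
    thus ?thesis using antisym[of "(dp + dq) mod 2" d w h] wh that by simp
  qed
  hence "w \<in> Z" using br_homog_all wC unfolding center_def by blast
  hence "pi w = (\<lambda>k. 0)" using pi_Z by simp
  thus False using pw[of "2*m"] by (simp add: ee_def)
qed


lemma brval: "x \<in> Car \<Longrightarrow> y \<in> Car \<Longrightarrow> pi x = ee p \<Longrightarrow> pi y = ee q \<Longrightarrow>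
  pi (br x y) = (\<lambda>k. if k = 2*m then
   ((if p < m \<and> q = m + p then 1 else 0) - (if q < m \<and> p = m + q then 1 else 0)
    + (if 2*m < p \<and> p < 2*m+1+n \<and> p = q then 1 else 0)) else 0)"
proof -
  assume a: "x \<in> Car" "y \<in> Car" "pi x = ee p" "pi y = ee q"
  have "pi (br x y) = lbr (heis m n) (ee p) (ee q)" using pi_br[OF a(1,2)] a(3,4) by simp
  thus ?thesis by (simp only: heis_br_ee)
qed

lemma ee_2m: "(\<lambda>k. if k = 2*m then (1::'f) else 0) = ee (2*m)" by (simp add: ee_def fun_eq_iff)

lemma forward: assumes c3: "(3::'f) \<noteq> 0" and mn: "1 \<le> m + n" shows "m = 1 \<and> n = 0"
proof (rule ccontr)
  assume nn: "\<not> (m = 1 \<and> n = 0)"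
  have E0: "Ev = hom L 0" and O1: "Od = hom L 1" by (simp_all add: hom_def)
  consider (A) "m \<ge> 2" | (B) "m = 1" "n \<ge> 1" | (C) "m = 0" "n \<ge> 2" | (D) "m = 0" "n = 1"
    using nn mn by linarith
  then show False
  proof cases
    case A
    obtain a0 where a0: "a0 \<in> Ev" "pi a0 = ee 0" using pre_even by blast
    obtain am where am: "am \<in> Ev" "pi am = ee m" using pre_even[of m] by auto
    obtain a1 where a1: "a1 \<in> Ev" "pi a1 = ee 1" using pre_even[of 1] A by auto
    obtain am1 where am1: "am1 \<in> Ev" "pi am1 = ee (m+1)" using pre_even[of "m+1"] A by auto
    have C: "a0 \<in> Car" "am \<in> Car" "a1 \<in> Car" "am1 \<in> Car" using a0 am a1 am1 Ev_C by auto
    have w: "pi (br a0 am) = ee (2*m)" using brval[OF C(1,2) a0(2) am(2)] A by (simp add: ee_def fun_eq_iff)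
    have w': "pi (br a1 am1) = ee (2*m)" using brval[OF C(3,4) a1(2) am1(2)] A by (simp add: ee_def fun_eq_iff)
    have k1: "br a0 (br a1 am1) = z0"
      by (rule kill[of 0 0 0]) (use a0 a1 am1 E0 brval[OF C(4,1) am1(2) a0(2)] brval[OF C(1,3) a0(2) a1(2)] A in auto)
    have k2: "br am (br a1 am1) = z0"
      by (rule kill[of 0 0 0]) (use am a1 am1 E0 brval[OF C(4,2) am1(2) am(2)] brval[OF C(2,3) am(2) a1(2)] A in auto)
    have h1: "br a0 (br a0 am) = z0"
      by (rule K[of a0 "br a0 am" "br a1 am1" 1]) (use C k1 w w' in auto)
    have h2: "br am (br a0 am) = z0"
      by (rule K[of am "br a0 am" "br a1 am1" 1]) (use C k2 w w' in auto)
    show False by (rule core[of 0 0 a0 am]) (use a0 am E0 w h1 h2 in auto)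
  next
    case B
    obtain a0 where a0: "a0 \<in> Ev" "pi a0 = ee 0" using pre_even by blast
    obtain am where am: "am \<in> Ev" "pi am = ee m" using pre_even[of m] by auto
    obtain y where y: "y \<in> Od" "pi y = ee (2*m+1)" using pre_odd[of "2*m+1"] B by auto
    have C: "a0 \<in> Car" "am \<in> Car" "y \<in> Car" using a0 am y Ev_C Od_C by auto
    have w: "pi (br a0 am) = ee (2*m)" using brval[OF C(1,2) a0(2) am(2)] B by (simp add: ee_def fun_eq_iff)
    have w': "pi (br y y) = ee (2*m)" using brval[OF C(3,3) y(2) y(2)] B by (simp add: ee_def fun_eq_iff)
    have k1: "br a0 (br y y) = z0"
      by (rule kill[of 0 1 1]) (use a0 y E0 O1 brval[OF C(3,1) y(2) a0(2)] brval[OF C(1,3) a0(2) y(2)] B in auto)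
    have k2: "br am (br y y) = z0"
      by (rule kill[of 0 1 1]) (use am y E0 O1 brval[OF C(3,2) y(2) am(2)] brval[OF C(2,3) am(2) y(2)] B in auto)
    have h1: "br a0 (br a0 am) = z0"
      by (rule K[of a0 "br a0 am" "br y y" 1]) (use C k1 w w' in auto)
    have h2: "br am (br a0 am) = z0"
      by (rule K[of am "br a0 am" "br y y" 1]) (use C k2 w w' in auto)
    show False by (rule core[of 0 0 a0 am]) (use a0 am E0 w h1 h2 in auto)
  next
    case C
    obtain y1 where y1: "y1 \<in> Od" "pi y1 = ee 1" using pre_odd[of 1] C by auto
    obtain y2 where y2: "y2 \<in> Od" "pi y2 = ee 2" using pre_odd[of 2] C by auto
    have Cs: "y1 \<in> Car" "y2 \<in> Car" using y1 y2 Od_C by auto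
    have w: "pi (br y1 y1) = ee (2*m)" using brval[OF Cs(1,1) y1(2) y1(2)] C by (simp add: ee_def fun_eq_iff)
    have w': "pi (br y2 y2) = ee (2*m)" using brval[OF Cs(2,2) y2(2) y2(2)] C by (simp add: ee_def fun_eq_iff)
    have k1: "br y1 (br y2 y2) = z0"
      by (rule kill[of 1 1 1]) (use y1 y2 O1 brval[OF Cs(2,1) y2(2) y1(2)] brval[OF Cs(1,2) y1(2) y2(2)] C in auto)
    have h1: "br y1 (br y1 y1) = z0"
      by (rule K[of y1 "br y1 y1" "br y2 y2" 1]) (use Cs k1 w w' in auto)
    show False by (rule core[of 1 1 y1 y1]) (use y1 O1 w h1 in auto)
  next
    case D
    obtain y where y: "y \<in> Od" "pi y = ee 1" using pre_odd[of 1] D by auto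
    have yC: "y \<in> Car" using y Od_C by auto
    have w: "pi (br y y) = ee (2*m)" using brval[OF yC yC y(2) y(2)] D by (simp add: ee_def fun_eq_iff)
    define v where "v = br y (br y y)"
    have vC: "v \<in> Car" using yC v_def by simp
    have "pl (sm (-1) v) (pl (sm (-1) v) (sm (-1) v)) = z0"
      using jacobi[of 1 1 1 y y y] y O1 v_def by simp
    hence "sm (-3) v = z0" using vC smul_smul_add by simp
    hence "v = z0" using smul_eq_0 vC c3 by (metis neg_equal_0_iff_equal)
    show False by (rule core[of 1 1 y y]) (use y O1 w \<open>v = z0\<close> v_def in auto)
  qed
qed

end



definition H4 :: "('f::field, nat \<Rightarrow> 'f) lsa" where
  "H4 = \<lparr> lcarrier = {u. \<forall>k\<ge>4. u k = 0}, leven = {u. \<forall>k\<ge>4. u k = 0}, lodd = {\<lambda>k. 0},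
     ladd = (\<lambda>u v k. u k + v k), lzero = (\<lambda>k. 0), lneg = (\<lambda>u k. - u k),
     lsmul = (\<lambda>c u k. c * u k),
     lbr = (\<lambda>u v k. if k = 2 then u 0 * v 1 - u 1 * v 0 else if k = 3 then u 0 * v 2 - u 2 * v 0 else 0) \<rparr>"

lemma all2: "(\<forall>d<(2::nat). P d) \<longleftrightarrow> P 0 \<and> P 1"
  by (auto simp: less_2_cases_iff)

lemma H4_simps:
  "lcarrier (H4::('f::field, nat \<Rightarrow> 'f) lsa) = {u. \<forall>k\<ge>4. u k = 0}"
  "leven (H4::('f::field, nat \<Rightarrow> 'f) lsa) = {u. \<forall>k\<ge>4. u k = 0}"
  "lodd (H4::('f::field, nat \<Rightarrow> 'f) lsa) = {\<lambda>k. 0}"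
  "ladd (H4::('f::field, nat \<Rightarrow> 'f) lsa) = (\<lambda>u v k. u k + v k)"
  "lzero (H4::('f::field, nat \<Rightarrow> 'f) lsa) = (\<lambda>k. 0)"
  "lneg (H4::('f::field, nat \<Rightarrow> 'f) lsa) = (\<lambda>u k. - u k)"
  "lsmul (H4::('f::field, nat \<Rightarrow> 'f) lsa) = (\<lambda>c u k. c * u k)"
  "lbr (H4::('f::field, nat \<Rightarrow> 'f) lsa) = (\<lambda>u v k. if k = 2 then u 0 * v 1 - u 1 * v 0 else if k = 3 then u 0 * v 2 - u 2 * v 0 else 0)"
  by (simp_all add: H4_def)

lemma H4_vs: "vector_space_on (H4 :: ('f::field, nat \<Rightarrow> 'f) lsa)"
  unfolding vector_space_on_def H4_simps by (auto simp: fun_eq_iff algebra_simps)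

lemma hom_H4: "hom (H4 :: ('f::field, nat \<Rightarrow> 'f) lsa) d = (if d = 0 then {u. \<forall>k\<ge>4. u k = 0} else {\<lambda>k. 0})"
  by (simp add: hom_def H4_simps)

lemma c2: "subspace_on (H4 :: ('f::field, nat \<Rightarrow> 'f) lsa) (leven H4)"
  unfolding subspace_on_def H4_simps by auto
lemma c3: "subspace_on (H4 :: ('f::field, nat \<Rightarrow> 'f) lsa) (lodd H4)"
  unfolding subspace_on_def H4_simps by auto
lemma c4: "leven (H4 :: ('f::field, nat \<Rightarrow> 'f) lsa) \<inter> lodd H4 = {lzero H4}"
  unfolding H4_simps by auto
lemma c5: "\<forall>x\<in>lcarrier (H4 :: ('f::field, nat \<Rightarrow> 'f) lsa). \<exists>e\<in>leven H4. \<exists>d\<in>lodd H4. x = ladd H4 e d"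
  unfolding H4_simps by auto
lemma c6: "\<forall>x\<in>lcarrier (H4 :: ('f::field, nat \<Rightarrow> 'f) lsa). \<forall>y\<in>lcarrier H4. lbr H4 x y \<in> lcarrier H4"
  unfolding H4_simps by auto
lemma c7: "\<forall>a b. \<forall>x\<in>lcarrier (H4 :: ('f::field, nat \<Rightarrow> 'f) lsa). \<forall>y\<in>lcarrier H4. \<forall>z\<in>lcarrier H4.
        lbr H4 (ladd H4 (lsmul H4 a x) (lsmul H4 b y)) z
          = ladd H4 (lsmul H4 a (lbr H4 x z)) (lsmul H4 b (lbr H4 y z)) \<and>
        lbr H4 z (ladd H4 (lsmul H4 a x) (lsmul H4 b y))
          = ladd H4 (lsmul H4 a (lbr H4 z x)) (lsmul H4 b (lbr H4 z y))"
  unfolding H4_simps by (simp add: fun_eq_iff algebra_simps)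
lemma c8: "\<forall>dx<2. \<forall>dy<2. \<forall>x\<in>hom (H4 :: ('f::field, nat \<Rightarrow> 'f) lsa) dx. \<forall>y\<in>hom H4 dy.
        lbr H4 x y \<in> hom H4 ((dx + dy) mod 2)"
  unfolding all2 hom_H4 by (simp add: H4_simps fun_eq_iff)
lemma c9: "\<forall>dx<2. \<forall>dy<2. \<forall>x\<in>hom (H4 :: ('f::field, nat \<Rightarrow> 'f) lsa) dx. \<forall>y\<in>hom H4 dy.
        lbr H4 x y = lneg H4 (lsmul H4 ((-1) ^ (dx * dy)) (lbr H4 y x))"
  unfolding all2 hom_H4 by (simp add: H4_simps fun_eq_iff algebra_simps)
lemma jac: "(u::nat\<Rightarrow>'f::field) 0 * (v 0 * w 1 - v 1 * w 0) + v 0 * (w 0 * u 1 - w 1 * u 0) + w 0 * (u 0 * v 1 - u 1 * v 0) = 0"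
  by (simp add: algebra_simps)
lemma c10: "\<forall>dx<2. \<forall>dy<2. \<forall>dz<2. \<forall>x\<in>hom (H4 :: ('f::field, nat \<Rightarrow> 'f) lsa) dx. \<forall>y\<in>hom H4 dy. \<forall>z\<in>hom H4 dz.
        ladd H4 (lsmul H4 ((-1) ^ (dx * dz)) (lbr H4 x (lbr H4 y z)))
          (ladd H4 (lsmul H4 ((-1) ^ (dy * dx)) (lbr H4 y (lbr H4 z x)))
                  (lsmul H4 ((-1) ^ (dz * dy)) (lbr H4 z (lbr H4 x y)))) = lzero H4"
  unfolding all2 hom_H4 by (simp add: H4_simps fun_eq_iff algebra_simps)

lemma H4_lie: "lie_superalgebra (H4 :: ('f::field, nat \<Rightarrow> 'f) lsa)"
  unfolding lie_superalgebra_def using H4_vs c2 c3 c4 c5 c6 c7 c8 c9 c10 by blast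

interpretation H4L: LSA "H4 :: ('f::field, nat \<Rightarrow> 'f) lsa" by unfold_locales (rule H4_lie)

lemma H4_center: "center (H4 :: ('f::field, nat \<Rightarrow> 'f) lsa) = {u. (\<forall>k\<ge>4. u k = 0) \<and> u 0 = 0 \<and> u 1 = 0 \<and> u 2 = 0}"
proof (rule set_eqI, rule iffI)
  fix u :: "nat \<Rightarrow> 'f" assume u: "u \<in> center (H4 :: ('f, nat \<Rightarrow> 'f) lsa)"
  have c: "u \<in> lcarrier (H4 :: ('f, nat \<Rightarrow> 'f) lsa)" and b: "\<And>x. x \<in> lcarrier (H4 :: ('f, nat \<Rightarrow> 'f) lsa) \<Longrightarrow> lbr H4 u x = lzero (H4 :: ('f, nat \<Rightarrow> 'f) lsa)"
    using u unfolding center_def by auto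
  have "lbr H4 u (ee 1) 2 = 0" using b[of "ee 1"] by (simp add: H4_simps ee_def)
  moreover have "lbr H4 u (ee 0) 2 = 0" using b[of "ee 0"] by (simp add: H4_simps ee_def)
  moreover have "lbr H4 u (ee 0) 3 = 0" using b[of "ee 0"] by (simp add: H4_simps ee_def)
  ultimately show "u \<in> {u. (\<forall>k\<ge>4. u k = 0) \<and> u 0 = 0 \<and> u 1 = 0 \<and> u 2 = 0}"
    using c by (simp add: H4_simps ee_def)
next
  fix u :: "nat \<Rightarrow> 'f" assume "u \<in> {u. (\<forall>k\<ge>4. u k = 0) \<and> u 0 = 0 \<and> u 1 = 0 \<and> u 2 = 0}"
  thus "u \<in> center (H4 :: ('f, nat \<Rightarrow> 'f) lsa)" unfolding center_def by (simp add: H4_simps fun_eq_iff)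
qed

definition trunc :: "(nat \<Rightarrow> 'f::field) \<Rightarrow> nat \<Rightarrow> 'f" where "trunc u = (\<lambda>k. if k < 3 then u k else 0)"

definition fq :: "(nat \<Rightarrow> 'f::field) set \<Rightarrow> nat \<Rightarrow> 'f" where "fq A = trunc (rep A)"

lemma lt3: "(k::nat) < 3 \<longleftrightarrow> k = 0 \<or> k = 1 \<or> k = 2" by auto

lemma fq_cs: assumes "a \<in> lcarrier (H4 :: ('f::field, nat \<Rightarrow> 'f) lsa)"
  shows "fq (coset (H4 :: ('f, nat \<Rightarrow> 'f) lsa) (center H4) a) = trunc a"
proof -
  obtain i where i: "i \<in> center (H4 :: ('f, nat \<Rightarrow> 'f) lsa)" "rep (coset (H4 :: ('f, nat \<Rightarrow> 'f) lsa) (center H4) a) = ladd H4 a i"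
    using H4L.rep_cs[OF assms] by blast
  have "i 0 = 0" "i 1 = 0" "i 2 = 0" using i(1) unfolding H4_center by auto
  hence "\<And>k. k < 3 \<Longrightarrow> i k = 0" unfolding lt3 by auto
  thus ?thesis unfolding fq_def i(2) by (simp add: trunc_def H4_simps fun_eq_iff)
qed

lemma cs_eq: assumes "a \<in> lcarrier (H4 :: ('f::field, nat \<Rightarrow> 'f) lsa)" "b \<in> lcarrier (H4 :: ('f, nat \<Rightarrow> 'f) lsa)" "trunc a = trunc b"
  shows "coset (H4 :: ('f, nat \<Rightarrow> 'f) lsa) (center H4) a = coset H4 (center H4) b"
proof -
  define i where "i = (\<lambda>k. b k - a k)"
  have ca: "\<forall>k\<ge>4. a k = 0" "\<forall>k\<ge>4. b k = 0" using assms(1,2) by (simp_all add: H4_simps)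
  have t0: "a k = b k" if "k < 3" for k
  proof -
    have "trunc a k = trunc b k" using assms(3) by simp
    thus ?thesis using that by (simp add: trunc_def)
  qed
  have t: "a 0 = b 0" "a 1 = b 1" "a 2 = b 2" using t0 by simp_all
  have "i \<in> center (H4 :: ('f, nat \<Rightarrow> 'f) lsa)" unfolding H4_center i_def using ca t by auto
  moreover have "b = ladd (H4 :: ('f, nat \<Rightarrow> 'f) lsa) a i" by (simp add: H4_simps i_def)
  ultimately show ?thesis using H4L.coset_shift assms by metis
qed

lemma heis10_odd: "lodd (heis 1 0 :: ('f::field, nat \<Rightarrow> 'f) lsa) = {\<lambda>k. 0}"
proof (rule set_eqI, rule iffI)
  fix u :: "nat \<Rightarrow> 'f" assume u: "u \<in> lodd (heis 1 0 :: ('f, nat \<Rightarrow> 'f) lsa)"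
  have "u k = 0" for k using u by (cases "k \<le> 2") (auto simp: heis_simps)
  thus "u \<in> {\<lambda>k. 0}" by (auto simp: fun_eq_iff)
qed (simp add: heis_simps)

lemma heis10_ev: "leven (heis 1 0 :: ('f::field, nat \<Rightarrow> 'f) lsa) = lcarrier (heis 1 0)"
  by (auto simp: heis_simps)

lemma QH_cases: assumes "X \<in> lcarrier (quotient (H4 :: ('f::field, nat \<Rightarrow> 'f) lsa) (center H4))"
  obtains x where "x \<in> lcarrier (H4 :: ('f, nat \<Rightarrow> 'f) lsa)" "X = coset H4 (center H4) x"
  using assms H4L.Q_car by auto

lemma backward: "lsa_iso (quotient (H4 :: ('f::field, nat \<Rightarrow> 'f) lsa) (center H4)) (heis 1 0 :: ('f, nat \<Rightarrow> 'f) lsa)"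
  unfolding lsa_iso_def
proof (intro exI[of _ fq] conjI)
  let ?H = "H4 :: ('f, nat \<Rightarrow> 'f) lsa"
  let ?cs = "coset ?H (center ?H)"
  have carH: "leven ?H = lcarrier ?H" "lodd ?H = {\<lambda>k. 0}"
    by (simp_all add: H4_simps)
  have tr: "u \<in> lcarrier ?H \<Longrightarrow> trunc u \<in> lcarrier (heis 1 0 :: ('f, nat \<Rightarrow> 'f) lsa)" for u
    by (simp add: heis_simps trunc_def)
  show bij: "bij_betw fq (lcarrier (quotient ?H (center ?H))) (lcarrier (heis 1 0 :: ('f, nat \<Rightarrow> 'f) lsa))"
    unfolding bij_betw_def H4L.Q_car
  proof
    show "inj_on fq (?cs ` lcarrier ?H)"
    proof (rule inj_onI)
      fix A B assume AB: "A \<in> ?cs ` lcarrier ?H" "B \<in> ?cs ` lcarrier ?H" "fq A = fq B"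
      then obtain a b where ab: "a \<in> lcarrier ?H" "b \<in> lcarrier ?H" "A = ?cs a" "B = ?cs b" by blast
      have "trunc a = trunc b" using AB(3) fq_cs[OF ab(1)] fq_cs[OF ab(2)] ab(3,4) by simp
      thus "A = B" using cs_eq[OF ab(1,2)] ab(3,4) by simp
    qed
    show "fq ` ?cs ` lcarrier ?H = lcarrier (heis 1 0 :: ('f, nat \<Rightarrow> 'f) lsa)"
    proof
      show "fq ` ?cs ` lcarrier ?H \<subseteq> lcarrier (heis 1 0 :: ('f, nat \<Rightarrow> 'f) lsa)"
      proof
        fix v assume "v \<in> fq ` ?cs ` lcarrier ?H"
        then obtain a where a: "a \<in> lcarrier ?H" "v = fq (?cs a)" by blast
        hence "v = trunc a" using fq_cs[OF a(1)] by simp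
        thus "v \<in> lcarrier (heis 1 0 :: ('f, nat \<Rightarrow> 'f) lsa)" using tr[OF a(1)] by simp
      qed
      show "lcarrier (heis 1 0 :: ('f, nat \<Rightarrow> 'f) lsa) \<subseteq> fq ` ?cs ` lcarrier ?H"
      proof
        fix u assume u: "u \<in> lcarrier (heis 1 0 :: ('f, nat \<Rightarrow> 'f) lsa)"
        hence uH: "u \<in> lcarrier ?H" by (simp add: heis_simps H4_simps)
        have "trunc u = u" using u by (auto simp: heis_simps trunc_def fun_eq_iff)
        hence "u = fq (?cs u)" using fq_cs[OF uH] by simp
        thus "u \<in> fq ` ?cs ` lcarrier ?H" using uH by blast
      qed
    qed
  qed
  show "fq ` leven (quotient ?H (center ?H)) = leven (heis 1 0 :: ('f, nat \<Rightarrow> 'f) lsa)"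
  proof -
    have "leven (quotient ?H (center ?H)) = lcarrier (quotient ?H (center ?H))"
      by (simp add: H4L.Q_car H4L.Q_ev carH)
    moreover have "fq ` lcarrier (quotient ?H (center ?H)) = lcarrier (heis 1 0 :: ('f, nat \<Rightarrow> 'f) lsa)"
      using bij unfolding bij_betw_def by blast
    ultimately show ?thesis by (simp only: heis10_ev)
  qed
  show "fq ` lodd (quotient ?H (center ?H)) = lodd (heis 1 0 :: ('f, nat \<Rightarrow> 'f) lsa)"
  proof -
    have "(\<lambda>k. 0) \<in> lcarrier ?H" by (simp add: H4_simps)
    hence "fq (?cs (\<lambda>k. 0)) = (\<lambda>k. 0)" using fq_cs[of "\<lambda>k. 0"] by (simp add: trunc_def)
    moreover have "lodd (quotient ?H (center ?H)) = {?cs (\<lambda>k. 0)}" by (simp add: H4L.Q_od carH)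
    ultimately show ?thesis unfolding heis10_odd by simp
  qed
  show "\<forall>x\<in>lcarrier (quotient ?H (center ?H)). \<forall>y\<in>lcarrier (quotient ?H (center ?H)).
      fq (ladd (quotient ?H (center ?H)) x y) = ladd (heis 1 0) (fq x) (fq y)"
  proof (intro ballI)
    fix X Y assume X: "X \<in> lcarrier (quotient ?H (center ?H))" and Y: "Y \<in> lcarrier (quotient ?H (center ?H))"
    obtain x where x: "x \<in> lcarrier ?H" "X = ?cs x" using X by (rule QH_cases)
    obtain y where y: "y \<in> lcarrier ?H" "Y = ?cs y" using Y by (rule QH_cases)
    have "fq (ladd (quotient ?H (center ?H)) X Y) = trunc (ladd ?H x y)"
      using H4L.q_add[OF x(1) y(1)] fq_cs H4L.add_C[OF x(1) y(1)] x(2) y(2) by simp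
    also have "\<dots> = ladd (heis 1 0) (trunc x) (trunc y)" by (simp add: trunc_def H4_simps heis_simps fun_eq_iff)
    finally show "fq (ladd (quotient ?H (center ?H)) X Y) = ladd (heis 1 0) (fq X) (fq Y)"
      using fq_cs[OF x(1)] fq_cs[OF y(1)] x(2) y(2) by simp
  qed
  show "\<forall>c. \<forall>x\<in>lcarrier (quotient ?H (center ?H)).
      fq (lsmul (quotient ?H (center ?H)) c x) = lsmul (heis 1 0) c (fq x)"
  proof (intro allI ballI)
    fix c X assume X: "X \<in> lcarrier (quotient ?H (center ?H))"
    obtain x where x: "x \<in> lcarrier ?H" "X = ?cs x" using X by (rule QH_cases)
    have "fq (lsmul (quotient ?H (center ?H)) c X) = trunc (lsmul ?H c x)"
      using H4L.q_sm[OF x(1)] fq_cs[OF H4L.smul_C[OF x(1)]] x(2) by simp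
    also have "\<dots> = lsmul (heis 1 0) c (trunc x)" by (simp add: trunc_def H4_simps heis_simps fun_eq_iff)
    finally show "fq (lsmul (quotient ?H (center ?H)) c X) = lsmul (heis 1 0) c (fq X)"
      using fq_cs[OF x(1)] x(2) by simp
  qed
  show "\<forall>x\<in>lcarrier (quotient ?H (center ?H)). \<forall>y\<in>lcarrier (quotient ?H (center ?H)).
      fq (lbr (quotient ?H (center ?H)) x y) = lbr (heis 1 0) (fq x) (fq y)"
  proof (intro ballI)
    fix X Y assume X: "X \<in> lcarrier (quotient ?H (center ?H))" and Y: "Y \<in> lcarrier (quotient ?H (center ?H))"
    obtain x where x: "x \<in> lcarrier ?H" "X = ?cs x" using X by (rule QH_cases)
    obtain y where y: "y \<in> lcarrier ?H" "Y = ?cs y" using Y by (rule QH_cases)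
    have "fq (lbr (quotient ?H (center ?H)) X Y) = trunc (lbr ?H x y)"
      using H4L.q_br[OF x(1) y(1)] fq_cs H4L.br_C[OF x(1) y(1)] x(2) y(2) by simp
    also have "\<dots> = lbr (heis 1 0) (trunc x) (trunc y)" by (simp add: trunc_def H4_simps heis_simps fun_eq_iff)
    finally show "fq (lbr (quotient ?H (center ?H)) X Y) = lbr (heis 1 0) (fq X) (fq Y)"
      using fq_cs[OF x(1)] fq_cs[OF y(1)] x(2) y(2) by simp
  qed
qed


theorem mainTheorem3:
  fixes m n :: nat
  assumes char2: "(2::'f::field) \<noteq> 0"
    and char3: "(3::'f) \<noteq> 0"
    and mn: "m + n \<ge> 1"
  shows "(capable_in TYPE('b) (heis m n :: ('f, nat \<Rightarrow> 'f) lsa) \<longrightarrow> m = 1 \<and> n = 0) \<and>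
         (m = 1 \<and> n = 0 \<longrightarrow> capable_in TYPE(nat \<Rightarrow> 'f) (heis m n :: ('f, nat \<Rightarrow> 'f) lsa))"
proof (rule conjI; rule impI)
  assume "capable_in TYPE('b) (heis m n :: ('f, nat \<Rightarrow> 'f) lsa)"
  then obtain H :: "('f, 'b) lsa" where H: "lie_superalgebra H" "lsa_iso (quotient H (center H)) (heis m n)"
    unfolding capable_in_def by blast
  then obtain f where f: "bij_betw f (lcarrier (quotient H (center H))) (lcarrier (heis m n :: ('f, nat \<Rightarrow> 'f) lsa))"
    "f ` leven (quotient H (center H)) = leven (heis m n :: ('f, nat \<Rightarrow> 'f) lsa)"
    "f ` lodd (quotient H (center H)) = lodd (heis m n :: ('f, nat \<Rightarrow> 'f) lsa)"
    "\<forall>x\<in>lcarrier (quotient H (center H)). \<forall>y\<in>lcarrier (quotient H (center H)).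
        f (ladd (quotient H (center H)) x y) = ladd (heis m n) (f x) (f y)"
    "\<forall>c. \<forall>x\<in>lcarrier (quotient H (center H)).
        f (lsmul (quotient H (center H)) c x) = lsmul (heis m n) c (f x)"
    "\<forall>x\<in>lcarrier (quotient H (center H)). \<forall>y\<in>lcarrier (quotient H (center H)).
        f (lbr (quotient H (center H)) x y) = lbr (heis m n) (f x) (f y)"
    unfolding lsa_iso_def by blast
  interpret C: CAP H m n f by unfold_locales (use H f in auto)
  show "m = 1 \<and> n = 0" using C.forward char3 mn by simp
next
  assume "m = 1 \<and> n = 0"
  thus "capable_in TYPE(nat \<Rightarrow> 'f) (heis m n :: ('f, nat \<Rightarrow> 'f) lsa)"
    unfolding capable_in_def using H4_lie backward by blast
qed

end
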